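(* Let $G$ be a topological group with identity $e$ and let $\mathcal A$ be the collection of all open subgroups of $G$. Then $G$ is strongly totally separated with respect to its left uniformity (equivalently, with respect to its right uniformity) if and only if $\bigcap_{A\in\mathcal A}A=\{e\}$.
   Context: A topological group is a group with a topology making multiplication and inversion continuous. For $A\subseteq G$: $A_L=\{(x,y): x^{-1}y\in A\}$, $A_R=\{(x,y): yx^{-1}\in A\}$. The left (resp. right) uniformity is the uniformity on $G$ with base $\{W_L: W\text{ open}, e\in W\}$ (resp. $\{W_R\}$). Sets $A,B$ are uniformly separated with respect to a uniformity $\mathcal U$ if some $U\in\mathcal U$ contains no $(x,y)$ with $x\in A$, $y\in B$. A uniform space $(X,\mathcal U)$ is strongly totally separated if for all $x\neq y$ in $X$ there is $V\subseteq X$ with $x\in V$, $y\notin V$, and $V$ uniformly separated from $X\setminus V$. *)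

theory Defs
  imports "HOL-Analysis.Analysis"
begin

text \<open>Groups are written additively via the (not necessarily commutative) class group_add:
  x^{-1} y is rendered as -x + y, y x^{-1} as y + -x, the identity e as 0.\<close>

definition topological_group :: "'a::{topological_space, group_add} itself \<Rightarrow> bool" where
  "topological_group _ \<longleftrightarrow>
     continuous_on UNIV (\<lambda>p::'a \<times> 'a. fst p + snd p) \<and>
     continuous_on UNIV (\<lambda>x::'a. - x)"

definition L_rel :: "'a::group_add set \<Rightarrow> ('a \<times> 'a) set" where
  "L_rel A = {(x, y). - x + y \<in> A}"

definition R_rel :: "'a::group_add set \<Rightarrow> ('a \<times> 'a) set" where
  "R_rel A = {(x, y). y + - x \<in> A}"

definition left_uniformity :: "('a::{topological_space, group_add} \<times> 'a) set set" where
  "left_uniformity = {U. \<exists>W. open W \<and> 0 \<in> W \<and> L_rel W \<subseteq> U}"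

definition right_uniformity :: "('a::{topological_space, group_add} \<times> 'a) set set" where
  "right_uniformity = {U. \<exists>W. open W \<and> 0 \<in> W \<and> R_rel W \<subseteq> U}"

definition unif_separated :: "('a \<times> 'a) set set \<Rightarrow> 'a set \<Rightarrow> 'a set \<Rightarrow> bool" where
  "unif_separated \<U> A B \<longleftrightarrow> (\<exists>U\<in>\<U>. \<not> (\<exists>x\<in>A. \<exists>y\<in>B. (x, y) \<in> U))"

definition strongly_totally_separated :: "('a \<times> 'a) set set \<Rightarrow> bool" where
  "strongly_totally_separated \<U> \<longleftrightarrow>
     (\<forall>x y. x \<noteq> y \<longrightarrow> (\<exists>V. x \<in> V \<and> y \<notin> V \<and> unif_separated \<U> V (- V)))"

definition is_subgroup :: "'a::group_add set \<Rightarrow> bool" where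
  "is_subgroup H \<longleftrightarrow> 0 \<in> H \<and> (\<forall>x\<in>H. \<forall>y\<in>H. x + y \<in> H) \<and> (\<forall>x\<in>H. - x \<in> H)"

end

theory Submission
  imports Defs
begin

lemma open_vimage_UNIV:
  assumes "continuous_on UNIV f" "open B" shows "open (f -` B)"
  using assms continuous_on_open_vimage[of UNIV f] by auto

lemma tg_add_cont:
  assumes "topological_group (G::'a::{topological_space, group_add} itself)"
  shows "continuous_on UNIV (\<lambda>x::'a. c + x)"
proof -
  have c1: "continuous_on UNIV (\<lambda>p::'a \<times> 'a. fst p + snd p)"
    using assms unfolding topological_group_def by auto
  have c2: "continuous_on UNIV (\<lambda>x::'a. (c, x))"
    by (intro continuous_intros)
  have "continuous_on UNIV ((\<lambda>p::'a \<times> 'a. fst p + snd p) \<circ> (\<lambda>x. (c, x)))"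
    by (rule continuous_on_compose[OF c2]) (rule continuous_on_subset[OF c1], simp)
  then show ?thesis by (simp add: o_def)
qed

lemma tg_open_transl:
  assumes "topological_group (G::'a::{topological_space, group_add} itself)" "open (W::'a set)"
  shows "open ((\<lambda>w. h + w) ` W)"
proof -
  have "(\<lambda>w. h + w) ` W = (\<lambda>x. -h + x) -` W"
  proof
    show "(\<lambda>w. h + w) ` W \<subseteq> (\<lambda>x. -h + x) -` W" by (auto simp: add.assoc[symmetric])
    show "(\<lambda>x. -h + x) -` W \<subseteq> (\<lambda>w. h + w) ` W"
    proof
      fix x assume "x \<in> (\<lambda>x. -h + x) -` W"
      then have "-h + x \<in> W" "x = h + (-h + x)" by (auto simp: add.assoc[symmetric])
      then show "x \<in> (\<lambda>w. h + w) ` W" by blast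
    qed
  qed
  then show ?thesis using open_vimage_UNIV[OF tg_add_cont[OF assms(1)] assms(2)] by simp
qed

lemma tg_open_neg:
  assumes "topological_group (G::'a::{topological_space, group_add} itself)" "open (W::'a set)"
  shows "open (uminus -` W)"
  using assms open_vimage_UNIV[of "uminus::'a\<Rightarrow>'a" W] unfolding topological_group_def by auto

definition gen :: "'a::group_add set \<Rightarrow> 'a set" where
  "gen W = {x. \<exists>ws. set ws \<subseteq> W \<and> x = sum_list ws}"

lemma neg_sum_list: "- sum_list (ws::'a::group_add list) = sum_list (rev (map uminus ws))"
  by (induction ws) (auto simp: minus_add)

lemma gen_subgroup:
  assumes "\<And>w. w \<in> W \<Longrightarrow> - w \<in> W"
  shows "is_subgroup (gen W)"
  unfolding is_subgroup_def gen_def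
proof (intro conjI ballI)
  show "0 \<in> {x. \<exists>ws. set ws \<subseteq> W \<and> x = sum_list ws}"
    by (auto intro!: exI[of _ "[]"])
next
  fix x y assume "x \<in> {x. \<exists>ws. set ws \<subseteq> W \<and> x = sum_list ws}" "y \<in> {x. \<exists>ws. set ws \<subseteq> W \<and> x = sum_list ws}"
  then obtain xs ys where "set xs \<subseteq> W" "x = sum_list xs" "set ys \<subseteq> W" "y = sum_list ys" by auto
  then show "x + y \<in> {x. \<exists>ws. set ws \<subseteq> W \<and> x = sum_list ws}"
    by (auto intro!: exI[of _ "xs @ ys"])
next
  fix x assume "x \<in> {x. \<exists>ws. set ws \<subseteq> W \<and> x = sum_list ws}"
  then obtain xs where "set xs \<subseteq> W" "x = sum_list xs" by auto
  then show "- x \<in> {x. \<exists>ws. set ws \<subseteq> W \<and> x = sum_list ws}"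
    using assms by (auto simp: neg_sum_list subset_iff intro!: exI[of _ "rev (map uminus xs)"])
qed

lemma gen_open:
  assumes "topological_group (G::'a::{topological_space, group_add} itself)" "open (W::'a set)" "0 \<in> W"
  shows "open (gen W)"
proof -
  have "gen W = (\<Union>h\<in>gen W. (\<lambda>w. h + w) ` W)"
  proof
    show "gen W \<subseteq> (\<Union>h\<in>gen W. (\<lambda>w. h + w) ` W)" using assms(3) by force
    show "(\<Union>h\<in>gen W. (\<lambda>w. h + w) ` W) \<subseteq> gen W"
    proof clarify
      fix h w assume "h \<in> gen W" "w \<in> W"
      then obtain xs where "set xs \<subseteq> W" "h = sum_list xs" unfolding gen_def by auto
      then show "h + w \<in> gen W" using \<open>w \<in> W\<close> unfolding gen_def
        by (auto intro!: exI[of _ "xs @ [w]"])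
    qed
  qed
  moreover have "open (\<Union>h\<in>gen W. (\<lambda>w. h + w) ` W)"
    using tg_open_transl[OF assms(1,2)] by auto
  ultimately show ?thesis by simp
qed

lemma gen_in_V_left:
  assumes "\<And>u w. u \<in> V \<Longrightarrow> w \<in> W \<Longrightarrow> u + w \<in> V" "set ws \<subseteq> W"
  shows "\<forall>u\<in>V. u + sum_list ws \<in> V"
  using assms(2)
proof (induction ws)
  case Nil then show ?case by simp
next
  case (Cons w ws)
  then show ?case using assms(1) by (auto simp: add.assoc[symmetric])
qed

lemma gen_in_V_right:
  assumes "\<And>u w. u \<in> V \<Longrightarrow> w \<in> W \<Longrightarrow> w + u \<in> V" "set ws \<subseteq> W"
  shows "\<forall>u\<in>V. sum_list ws + u \<in> V"
  using assms(2)
proof (induction ws)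
  case Nil then show ?case by simp
next
  case (Cons w ws)
  then show ?case using assms(1) by (auto simp: add.assoc)
qed

lemma sym_nbhd:
  assumes "topological_group (G::'a::{topological_space, group_add} itself)" "open (W::'a set)" "0 \<in> W"
  shows "open (W \<inter> uminus -` W) \<and> 0 \<in> W \<inter> uminus -` W \<and> (\<forall>w. w \<in> W \<inter> uminus -` W \<longrightarrow> - w \<in> W \<inter> uminus -` W)"
  using assms tg_open_neg[OF assms(1,2)] by auto

lemma inter_zero_I:
  assumes "\<And>z. z \<noteq> 0 \<Longrightarrow> \<exists>A. open A \<and> is_subgroup A \<and> z \<notin> (A::'a::{topological_space,group_add} set)"
  shows "\<Inter> {A :: 'a set. open A \<and> is_subgroup A} = {0}"
proof (rule set_eqI, rule iffI)
  fix z assume z: "z \<in> \<Inter> {A :: 'a set. open A \<and> is_subgroup A}"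
  show "z \<in> {0}"
  proof (rule ccontr)
    assume "z \<notin> {0}"
    then obtain A where "open A" "is_subgroup A" "z \<notin> A" using assms by auto
    then show False using z by auto
  qed
next
  fix z :: 'a assume "z \<in> {0}"
  then show "z \<in> \<Inter> {A :: 'a set. open A \<and> is_subgroup A}" unfolding is_subgroup_def by auto
qed

lemma inter_zero_D:
  fixes z :: "'a::{topological_space,group_add}"
  assumes "\<Inter> {A :: 'a set. open A \<and> is_subgroup A} = {0}" "z \<noteq> 0"
  shows "\<exists>A. open A \<and> is_subgroup A \<and> z \<notin> A"
proof -
  have "z \<notin> \<Inter> {A :: 'a set. open A \<and> is_subgroup A}" using assms by simp
  then show ?thesis by auto
qed

theorem mainTheorem17:
  fixes G :: "'a::{topological_space, group_add} itself"
  assumes "topological_group G"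
  shows "(strongly_totally_separated (left_uniformity :: ('a \<times> 'a) set set)
            \<longleftrightarrow> \<Inter> {A :: 'a set. open A \<and> is_subgroup A} = {0})
       \<and> (strongly_totally_separated (right_uniformity :: ('a \<times> 'a) set set)
            \<longleftrightarrow> \<Inter> {A :: 'a set. open A \<and> is_subgroup A} = {0})"
proof (intro conjI iffI)
  assume st: "strongly_totally_separated (left_uniformity :: ('a \<times> 'a) set set)"
  show "\<Inter> {A :: 'a set. open A \<and> is_subgroup A} = {0}"
  proof (rule inter_zero_I)
    fix z :: 'a assume "z \<noteq> 0"
    then obtain V where V: "0 \<in> V" "z \<notin> V" "unif_separated left_uniformity V (- V)"
      using st unfolding strongly_totally_separated_def by metis
    then obtain W0 where W0: "open W0" "0 \<in> W0" and sep: "\<not> (\<exists>x\<in>V. \<exists>y\<in>-V. (x, y) \<in> L_rel W0)"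
      unfolding unif_separated_def left_uniformity_def by blast
    define W where "W = W0 \<inter> uminus -` W0"
    have W: "open W" "0 \<in> W" "\<And>w. w \<in> W \<Longrightarrow> - w \<in> W"
      using sym_nbhd[OF assms W0] unfolding W_def by auto
    have cl: "u + w \<in> V" if "u \<in> V" "w \<in> W" for u w
    proof (rule ccontr)
      assume "u + w \<notin> V"
      moreover have "(u, u + w) \<in> L_rel W0" using that unfolding L_rel_def W_def by (simp add: add.assoc[symmetric])
      ultimately show False using sep that(1) by blast
    qed
    have "gen W \<subseteq> V"
    proof
      fix x assume "x \<in> gen W"
      then obtain ws where "set ws \<subseteq> W" "x = sum_list ws" unfolding gen_def by auto
      then show "x \<in> V" using gen_in_V_left[OF cl \<open>set ws \<subseteq> W\<close>] V(1) by (metis add.right_neutral add_0)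
    qed
    then show "\<exists>A. open A \<and> is_subgroup A \<and> z \<notin> A"
      using gen_open[OF assms W(1,2)] gen_subgroup[OF W(3)] V(2) by blast
  qed
next
  assume st: "strongly_totally_separated (right_uniformity :: ('a \<times> 'a) set set)"
  show "\<Inter> {A :: 'a set. open A \<and> is_subgroup A} = {0}"
  proof (rule inter_zero_I)
    fix z :: 'a assume "z \<noteq> 0"
    then obtain V where V: "0 \<in> V" "z \<notin> V" "unif_separated right_uniformity V (- V)"
      using st unfolding strongly_totally_separated_def by metis
    then obtain W0 where W0: "open W0" "0 \<in> W0" and sep: "\<not> (\<exists>x\<in>V. \<exists>y\<in>-V. (x, y) \<in> R_rel W0)"
      unfolding unif_separated_def right_uniformity_def by blast
    define W where "W = W0 \<inter> uminus -` W0"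
    have W: "open W" "0 \<in> W" "\<And>w. w \<in> W \<Longrightarrow> - w \<in> W"
      using sym_nbhd[OF assms W0] unfolding W_def by auto
    have cl: "w + u \<in> V" if "u \<in> V" "w \<in> W" for u w
    proof (rule ccontr)
      assume "w + u \<notin> V"
      moreover have "(u, w + u) \<in> R_rel W0" using that unfolding R_rel_def W_def by (simp add: add.assoc)
      ultimately show False using sep that(1) by blast
    qed
    have "gen W \<subseteq> V"
    proof
      fix x assume "x \<in> gen W"
      then obtain ws where "set ws \<subseteq> W" "x = sum_list ws" unfolding gen_def by auto
      then show "x \<in> V" using gen_in_V_right[OF cl \<open>set ws \<subseteq> W\<close>] V(1) by (metis add.right_neutral add_0)
    qed
    then show "\<exists>A. open A \<and> is_subgroup A \<and> z \<notin> A"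
      using gen_open[OF assms W(1,2)] gen_subgroup[OF W(3)] V(2) by blast
  qed
next
  assume I: "\<Inter> {A :: 'a set. open A \<and> is_subgroup A} = {0}"
  show "strongly_totally_separated (left_uniformity :: ('a \<times> 'a) set set)"
    unfolding strongly_totally_separated_def
  proof (intro allI impI)
    fix x y :: 'a assume "x \<noteq> y"
    then have "-x + y \<noteq> 0" by (metis add_minus_cancel add.right_neutral)
    then obtain A where A: "open A" "is_subgroup A" "-x + y \<notin> A" using inter_zero_D[OF I] by blast
    define V where "V = {v. -x + v \<in> A}"
    have "x \<in> V" using A(2) unfolding V_def is_subgroup_def by simp
    moreover have "y \<notin> V" using A(3) unfolding V_def by simp
    moreover have "unif_separated left_uniformity V (- V)"
      unfolding unif_separated_def left_uniformity_def
    proof (intro bexI[of _ "L_rel A"] CollectI exI[of _ A])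
      show "open A \<and> 0 \<in> A \<and> L_rel A \<subseteq> L_rel A" using A unfolding is_subgroup_def by simp
      show "\<not> (\<exists>u\<in>V. \<exists>v\<in>- V. (u, v) \<in> L_rel A)"
      proof clarify
        fix u v assume "u \<in> V" "v \<notin> V" "(u, v) \<in> L_rel A"
        then have "(-x + u) + (-u + v) \<in> A" using A(2) unfolding V_def L_rel_def is_subgroup_def by auto
        then show False using \<open>v \<notin> V\<close> unfolding V_def by (simp add: add.assoc)
      qed
    qed
    ultimately show "\<exists>V. x \<in> V \<and> y \<notin> V \<and> unif_separated left_uniformity V (- V)" by blast
  qed
next
  assume I: "\<Inter> {A :: 'a set. open A \<and> is_subgroup A} = {0}"
  show "strongly_totally_separated (right_uniformity :: ('a \<times> 'a) set set)"
    unfolding strongly_totally_separated_def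
  proof (intro allI impI)
    fix x y :: 'a assume "x \<noteq> y"
    then have "y + -x \<noteq> 0" by (metis diff_add_cancel diff_conv_add_uminus add_0)
    then obtain A where A: "open A" "is_subgroup A" "y + -x \<notin> A" using inter_zero_D[OF I] by blast
    define V where "V = {v. v + -x \<in> A}"
    have "x \<in> V" using A(2) unfolding V_def is_subgroup_def by simp
    moreover have "y \<notin> V" using A(3) unfolding V_def by simp
    moreover have "unif_separated right_uniformity V (- V)"
      unfolding unif_separated_def right_uniformity_def
    proof (intro bexI[of _ "R_rel A"] CollectI exI[of _ A])
      show "open A \<and> 0 \<in> A \<and> R_rel A \<subseteq> R_rel A" using A unfolding is_subgroup_def by simp
      show "\<not> (\<exists>u\<in>V. \<exists>v\<in>- V. (u, v) \<in> R_rel A)"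
      proof clarify
        fix u v assume "u \<in> V" "v \<notin> V" "(u, v) \<in> R_rel A"
        then have "(v + -u) + (u + -x) \<in> A" using A(2) unfolding V_def R_rel_def is_subgroup_def by auto
        moreover have "v + -x = (v + -u) + (u + -x)" by (metis add.assoc add_minus_cancel)
        ultimately show False using \<open>v \<notin> V\<close> unfolding V_def by simp
      qed
    qed
    ultimately show "\<exists>V. x \<in> V \<and> y \<notin> V \<and> unif_separated right_uniformity V (- V)" by blast
  qed
qed

end
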